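(* Let $G=(V,E)$ be a finite perfect graph with vertex cost function $w:V\to\mathbb{Q}_+$. Then the core of the investment management game on $G$ (defined in the context) is non-empty.
   Context: A graph $G$ is perfect if for every $S\subseteq V$ the induced subgraph $G(S)$ satisfies $\omega(G(S))=\chi(G(S))$ (clique number equals chromatic number). A stable (independent) set is a set of pairwise non-adjacent vertices. The investment management game on $G$ with costs $w$: let $\mathcal{M}$ be the set of maximal cliques of $G$ (the investment firms). For $S\subseteq V$ (a scenario), $\mathrm{cost}(S)$ is the maximum of $\sum_{v\in I} w_v$ over stable sets $I$ of the induced subgraph $G(S)$, and $T=\mathrm{cost}(V)$. An imputation is a function $y:\mathcal{M}\to\mathbb{Q}_+$ with $\sum_{Q\in\mathcal{M}} y_Q=T$; for a scenario $S$, $\mathrm{money}(S)=\sum_{Q\in\mathcal{M}:\, Q\cap S\neq\emptyset} y_Q$. The core is the set of imputations $y$ with $\mathrm{money}(S)\ge\mathrm{cost}(S)$ for all $S\subseteq V$. *)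

theory Defs
  imports Complex_Main
begin

definition simple_graph :: "'a set \<Rightarrow> ('a \<Rightarrow> 'a \<Rightarrow> bool) \<Rightarrow> bool" where
  "simple_graph V E \<longleftrightarrow> finite V \<and> (\<forall>u\<in>V. \<forall>v\<in>V. E u v \<longleftrightarrow> E v u) \<and> (\<forall>v\<in>V. \<not> E v v)"

definition clique :: "('a \<Rightarrow> 'a \<Rightarrow> bool) \<Rightarrow> 'a set \<Rightarrow> 'a set \<Rightarrow> bool" where
  "clique E S Q \<longleftrightarrow> Q \<subseteq> S \<and> (\<forall>u\<in>Q. \<forall>v\<in>Q. u \<noteq> v \<longrightarrow> E u v)"

definition stable_set :: "('a \<Rightarrow> 'a \<Rightarrow> bool) \<Rightarrow> 'a set \<Rightarrow> 'a set \<Rightarrow> bool" where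
  "stable_set E S I \<longleftrightarrow> I \<subseteq> S \<and> (\<forall>u\<in>I. \<forall>v\<in>I. u \<noteq> v \<longrightarrow> \<not> E u v)"

definition clique_number :: "('a \<Rightarrow> 'a \<Rightarrow> bool) \<Rightarrow> 'a set \<Rightarrow> nat" where
  "clique_number E S = Max (card ` {Q. clique E S Q})"

definition proper_colouring :: "('a \<Rightarrow> 'a \<Rightarrow> bool) \<Rightarrow> 'a set \<Rightarrow> nat \<Rightarrow> ('a \<Rightarrow> nat) \<Rightarrow> bool" where
  "proper_colouring E S k c \<longleftrightarrow> (\<forall>v\<in>S. c v < k) \<and> (\<forall>u\<in>S. \<forall>v\<in>S. E u v \<longrightarrow> c u \<noteq> c v)"

definition chromatic_number :: "('a \<Rightarrow> 'a \<Rightarrow> bool) \<Rightarrow> 'a set \<Rightarrow> nat" where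
  "chromatic_number E S = (LEAST k. \<exists>c. proper_colouring E S k c)"

definition perfect :: "'a set \<Rightarrow> ('a \<Rightarrow> 'a \<Rightarrow> bool) \<Rightarrow> bool" where
  "perfect V E \<longleftrightarrow> (\<forall>S\<subseteq>V. clique_number E S = chromatic_number E S)"

definition maximal_cliques :: "'a set \<Rightarrow> ('a \<Rightarrow> 'a \<Rightarrow> bool) \<Rightarrow> 'a set set" where
  "maximal_cliques V E = {Q. clique E V Q \<and> (\<forall>Q'. clique E V Q' \<and> Q \<subseteq> Q' \<longrightarrow> Q' = Q)}"

definition cost :: "('a \<Rightarrow> 'a \<Rightarrow> bool) \<Rightarrow> ('a \<Rightarrow> rat) \<Rightarrow> 'a set \<Rightarrow> rat" where
  "cost E w S = Max ((\<lambda>I. \<Sum>v\<in>I. w v) ` {I. stable_set E S I})"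

definition money :: "'a set \<Rightarrow> ('a \<Rightarrow> 'a \<Rightarrow> bool) \<Rightarrow> ('a set \<Rightarrow> rat) \<Rightarrow> 'a set \<Rightarrow> rat" where
  "money V E y S = (\<Sum>Q\<in>{Q\<in>maximal_cliques V E. Q \<inter> S \<noteq> {}}. y Q)"

definition imputation :: "'a set \<Rightarrow> ('a \<Rightarrow> 'a \<Rightarrow> bool) \<Rightarrow> ('a \<Rightarrow> rat) \<Rightarrow> ('a set \<Rightarrow> rat) \<Rightarrow> bool" where
  "imputation V E w y \<longleftrightarrow> (\<forall>Q\<in>maximal_cliques V E. y Q \<ge> 0)
     \<and> (\<Sum>Q\<in>maximal_cliques V E. y Q) = cost E w V"

definition core :: "'a set \<Rightarrow> ('a \<Rightarrow> 'a \<Rightarrow> bool) \<Rightarrow> ('a \<Rightarrow> rat) \<Rightarrow> ('a set \<Rightarrow> rat) set" where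
  "core V E w = {y. imputation V E w y \<and> (\<forall>S\<subseteq>V. money V E y S \<ge> cost E w S)}"

end

theory Submission imports Defs "HOL-Library.Multiset" begin

definition cov :: "'a set multiset \<Rightarrow> 'a \<Rightarrow> nat" where
  "cov J u = (\<Sum>B\<in>#J. if u \<in> B then 1 else 0)"

definition omg :: "'a set \<Rightarrow> ('a \<Rightarrow> 'a \<Rightarrow> bool) \<Rightarrow> ('a \<Rightarrow> nat) \<Rightarrow> nat" where
  "omg V E m = Max ((\<lambda>Q. sum m Q) ` {Q. clique E V Q})"

definition alp :: "'a set \<Rightarrow> ('a \<Rightarrow> 'a \<Rightarrow> bool) \<Rightarrow> ('a \<Rightarrow> nat) \<Rightarrow> nat" where
  "alp V E m = Max ((\<lambda>Q. sum m Q) ` {Q. stable_set E V Q})"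

lemma cov_empty[simp]: "cov {#} u = 0" by (simp add: cov_def)
lemma cov_add[simp]: "cov (add_mset B J) u = (if u \<in> B then 1 else 0) + cov J u"
  by (simp add: cov_def)

lemma finite_cliques: "finite V \<Longrightarrow> finite {Q. clique E V Q}"
  by (rule finite_subset[of _ "Pow V"]) (auto simp: clique_def)
lemma finite_stables: "finite V \<Longrightarrow> finite {Q. stable_set E V Q}"
  by (rule finite_subset[of _ "Pow V"]) (auto simp: stable_set_def)
lemma clique_empty: "clique E V {}" by (simp add: clique_def)
lemma stable_empty: "stable_set E V {}" by (simp add: stable_set_def)

lemma omg_ge: "finite V \<Longrightarrow> clique E V Q \<Longrightarrow> sum m Q \<le> omg V E m"
  unfolding omg_def by (rule Max_ge) (auto simp: finite_cliques)
lemma omg_att: "finite V \<Longrightarrow> \<exists>Q. clique E V Q \<and> sum m Q = omg V E m"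
proof -
  assume "finite V"
  hence "omg V E m \<in> (\<lambda>Q. sum m Q) ` {Q. clique E V Q}"
    unfolding omg_def by (intro Max_in) (use clique_empty in \<open>auto simp: finite_cliques\<close>)
  thus ?thesis by auto
qed
lemma alp_ge: "finite V \<Longrightarrow> stable_set E V Q \<Longrightarrow> sum m Q \<le> alp V E m"
  unfolding alp_def by (rule Max_ge) (auto simp: finite_stables)
lemma alp_att: "finite V \<Longrightarrow> \<exists>Q. stable_set E V Q \<and> sum m Q = alp V E m"
proof -
  assume "finite V"
  hence "alp V E m \<in> (\<lambda>Q. sum m Q) ` {Q. stable_set E V Q}"
    unfolding alp_def by (intro Max_in) (use stable_empty in \<open>auto simp: finite_stables\<close>)
  thus ?thesis by auto
qed

lemma clique_stable_card: "clique E V Q \<Longrightarrow> stable_set E S I \<Longrightarrow> finite Q \<Longrightarrow> card (Q \<inter> I) \<le> 1"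
proof -
  assume a: "clique E V Q" "stable_set E S I" "finite Q"
  have "\<forall>x\<in>Q \<inter> I. \<forall>y\<in>Q \<inter> I. x = y" using a(1,2) unfolding clique_def stable_set_def by blast
  thus ?thesis using a(3) card_le_Suc0_iff_eq[of "Q \<inter> I"] by auto
qed

lemma swap_ms: "(\<Sum>u\<in>V. \<Sum>B\<in>#J. h u B) = (\<Sum>B\<in>#J. \<Sum>u\<in>V. (h u B::nat))"
  by (induction J) (auto simp: sum.distrib)

lemma cov_sum: "finite Q \<Longrightarrow> (\<Sum>u\<in>Q. cov J u) = (\<Sum>B\<in>#J. card (B \<inter> Q))"
  unfolding cov_def
  apply (subst swap_ms)
  apply (rule arg_cong[where f=sum_mset])
  apply (rule image_mset_cong)
  apply (simp add: sum.If_cases Int_commute)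
  done

lemma msum_le: "(\<And>B. B \<in># J \<Longrightarrow> f B \<le> (1::nat)) \<Longrightarrow> (\<Sum>B\<in>#J. f B) \<le> size J"
proof (induction J)
  case (add x J)
  hence "f x \<le> 1" "(\<Sum>B\<in>#J. f B) \<le> size J" by auto
  thus ?case by simp
qed simp

lemma msum_le0: "(\<And>B. B \<in># J \<Longrightarrow> f B \<le> (1::nat)) \<Longrightarrow> A \<in># J \<Longrightarrow> f A = 0 \<Longrightarrow> (\<Sum>B\<in>#J. f B) + 1 \<le> size J"
proof -
  assume a: "\<And>B. B \<in># J \<Longrightarrow> f B \<le> (1::nat)" "A \<in># J" "f A = 0"
  then obtain J' where J: "J = add_mset A J'" by (metis multi_member_split)
  have "(\<Sum>B\<in>#J'. f B) \<le> size J'" using a(1) J by (intro msum_le) auto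
  thus ?thesis using J a(3) by simp
qed

lemma sum_count_sub: "set_mset M \<subseteq> A \<Longrightarrow> finite A \<Longrightarrow> sum (count M) A = size M"
proof (induction M)
  case empty thus ?case by simp
next
  case (add x M)
  have "sum (count (add_mset x M)) A = sum (\<lambda>a. (if a = x then 1 else 0) + count M a) A"
    by (rule sum.cong) auto
  also have "\<dots> = 1 + sum (count M) A" using add.prems by (simp add: sum.distrib)
  finally show ?case using add by simp
qed

lemma cov_pos: "cov J u \<ge> 1 \<Longrightarrow> \<exists>A\<in>#J. u \<in> A"
proof (rule ccontr)
  assume "cov J u \<ge> 1" "\<not> (\<exists>A\<in>#J. u \<in> A)"
  hence "cov J u = 0" unfolding cov_def by (induction J) auto
  thus False using \<open>cov J u \<ge> 1\<close> by simp
qed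

lemma cov_mem: "A \<in># J \<Longrightarrow> u \<in> A \<Longrightarrow> cov J u \<ge> 1"
proof -
  assume "A \<in># J" "u \<in> A"
  then obtain J' where "J = add_mset A J'" by (metis multi_member_split)
  thus ?thesis using \<open>u \<in> A\<close> by simp
qed


lemma omg_mono: "finite V \<Longrightarrow> (\<And>u. u \<in> V \<Longrightarrow> m' u \<le> m u) \<Longrightarrow> omg V E m' \<le> omg V E m"
proof -
  assume f: "finite V" and le: "\<And>u. u \<in> V \<Longrightarrow> m' u \<le> m u"
  obtain Q where Q: "clique E V Q" "sum m' Q = omg V E m'" using omg_att[OF f] by blast
  have "sum m' Q \<le> sum m Q" using Q(1) le by (intro sum_mono) (auto simp: clique_def)
  also have "\<dots> \<le> omg V E m" using omg_ge[OF f Q(1)] .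
  finally show ?thesis using Q(2) by simp
qed

lemma wcol:
  assumes sg: "simple_graph V E" and pf: "perfect V E"
  shows "\<exists>J. (\<forall>B\<in>#J. stable_set E V B) \<and> size J \<le> omg V E m \<and> (\<forall>v\<in>V. cov J v = m v)"
proof (induction "sum m V" arbitrary: m rule: less_induct)
  case less
  have fin: "finite V" using sg by (simp add: simple_graph_def)
  have irr: "\<And>v. v \<in> V \<Longrightarrow> \<not> E v v" using sg by (simp add: simple_graph_def)
  show ?case
  proof (cases "\<forall>v\<in>V. m v \<le> 1")
    case True
    define S where "S = {v\<in>V. m v = 1}"
    have SV: "S \<subseteq> V" by (auto simp: S_def)
    have finS: "finite S" using fin SV finite_subset by blast
    have eq: "clique_number E S = chromatic_number E S" using pf SV by (simp add: perfect_def)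
    obtain h where h: "bij_betw h S {0..<card S}" using ex_bij_betw_finite_nat[OF finS] by blast
    have "proper_colouring E S (card S) h"
      unfolding proper_colouring_def
    proof safe
      fix v assume "v \<in> S" thus "h v < card S" using h by (auto simp: bij_betw_def)
    next
      fix u v assume "u \<in> S" "v \<in> S" "E u v" "h u = h v"
      hence "u = v" using h by (auto simp: bij_betw_def inj_on_def)
      thus False using irr \<open>E u v\<close> \<open>u \<in> S\<close> SV by auto
    qed
    hence "\<exists>k c. proper_colouring E S k c" by blast
    hence "\<exists>c. proper_colouring E S (LEAST k. \<exists>c. proper_colouring E S k c) c" by (rule LeastI_ex)
    then obtain c where pc: "proper_colouring E S (chromatic_number E S) c"
      unfolding chromatic_number_def by blast
    define k where "k = chromatic_number E S"
    define J where "J = image_mset (\<lambda>i. {u\<in>S. c u = i}) (mset_set {0..<k})"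
    have st: "\<forall>B\<in>#J. stable_set E V B"
      using pc SV unfolding J_def stable_set_def proper_colouring_def k_def by fastforce
    have "finite {Q. clique E S Q}" using finite_cliques[OF finS] .
    hence "clique_number E S \<in> card ` {Q. clique E S Q}"
      unfolding clique_number_def by (intro Max_in) (use clique_empty in auto)
    then obtain Q0 where Q0: "clique E S Q0" "card Q0 = clique_number E S" by auto
    have Q0V: "clique E V Q0" using Q0(1) SV by (auto simp: clique_def)
    have "sum m Q0 = card Q0" using Q0(1) by (auto simp: clique_def S_def subset_iff)
    hence sz: "size J \<le> omg V E m" using omg_ge[OF fin Q0V, of m] Q0(2) eq
      by (simp add: J_def k_def)
    have cv: "\<forall>v\<in>V. cov J v = m v"
    proof
      fix v assume v: "v \<in> V"
      have "cov J v = (\<Sum>i\<in>{0..<k}. if v \<in> S \<and> c v = i then 1 else 0)"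
        unfolding cov_def J_def by (simp add: sum_unfold_sum_mset multiset.map_comp o_def)
      also have "\<dots> = (if v \<in> S then 1 else 0)"
      proof (cases "v \<in> S")
        case True
        hence "c v < k" using pc by (simp add: proper_colouring_def k_def)
        thus ?thesis using True by (simp add: sum.delta)
      qed simp
      also have "\<dots> = m v" using True v by (auto simp: S_def)
      finally show "cov J v = m v" .
    qed
    show ?thesis using st sz cv by blast
  next
    case False
    then obtain v where v: "v \<in> V" "m v \<ge> 2" by force
    define m' where "m' = m(v := m v - 1)"
    have sm: "sum m V = m v + sum m (V - {v})" using fin v(1) by (simp add: sum.remove)
    have sm': "sum m' V = m' v + sum m' (V - {v})" using fin v(1) by (simp add: sum.remove)
    have "sum m' (V - {v}) = sum m (V - {v})" by (rule sum.cong) (auto simp: m'_def)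
    hence lt': "sum m' V < sum m V" using sm sm' v(2) by (simp add: m'_def)
    obtain J' where J': "\<forall>B\<in>#J'. stable_set E V B" "size J' \<le> omg V E m'" "\<forall>u\<in>V. cov J' u = m' u"
      using less(1)[OF lt'] by blast
    have m'le: "\<And>u. u \<in> V \<Longrightarrow> m' u \<le> m u" by (simp add: m'_def)
    have om: "omg V E m' \<le> omg V E m" using omg_mono[OF fin m'le] .
    have vcl: "clique E V {v}" using v(1) by (simp add: clique_def)
    have om1: "omg V E m \<ge> 2" using omg_ge[OF fin vcl, of m] v(2) by simp
    show ?thesis
    proof (cases "omg V E m' < omg V E m")
      case True
      define J where "J = add_mset {v} J'"
      have "\<forall>B\<in>#J. stable_set E V B" using J'(1) v(1) by (auto simp: J_def stable_set_def)
      moreover have "size J \<le> omg V E m" using J'(2) True by (simp add: J_def)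
      moreover have "\<forall>u\<in>V. cov J u = m u" using J'(3) v(2) by (auto simp: J_def m'_def)
      ultimately show ?thesis by blast
    next
      case False
      define \<omega> where "\<omega> = omg V E m"
      have omeq: "omg V E m' = \<omega>" using False om by (simp add: \<omega>_def)
      have "cov J' v = m' v" using J'(3) v(1) by blast
      moreover have "m' v \<ge> 1" using v(2) by (simp add: m'_def)
      ultimately have "cov J' v \<ge> 1" by simp
      then have "\<exists>A\<in>#J'. v \<in> A" by (rule cov_pos)
      then obtain A where A: "A \<in># J'" "v \<in> A" by blast
      have AV: "A \<subseteq> V" using J'(1) A(1) by (auto simp: stable_set_def)
      define m'' where "m'' = (\<lambda>u. if u \<in> A - {v} then m' u - 1 else m' u)"
      have "sum m'' V \<le> sum m' V" by (rule sum_mono) (simp add: m''_def)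
      hence lt'': "sum m'' V < sum m V" using lt' by simp
      obtain J'' where J'': "\<forall>B\<in>#J''. stable_set E V B" "size J'' \<le> omg V E m''" "\<forall>u\<in>V. cov J'' u = m'' u"
        using less(1)[OF lt''] by blast
      have key: "omg V E m'' + 1 \<le> \<omega>"
      proof -
        obtain Q where Q: "clique E V Q" "sum m'' Q = omg V E m''" using omg_att[OF fin] by blast
        have QV: "Q \<subseteq> V" using Q(1) by (simp add: clique_def)
        have finQ: "finite Q" using QV fin finite_subset by blast
        have le1: "sum m'' Q \<le> sum m' Q" by (rule sum_mono) (simp add: m''_def)
        have le2: "sum m' Q \<le> \<omega>" using omg_ge[OF fin Q(1), of m'] omeq by simp
        show ?thesis
        proof (cases "sum m' Q < \<omega>")
          case True thus ?thesis using le1 Q(2) by simp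
        next
          case False
          hence eqQ: "sum m' Q = \<omega>" using le2 by simp
          have vQ: "v \<notin> Q"
          proof
            assume vQ: "v \<in> Q"
            have "sum m Q = m v + sum m (Q - {v})" using finQ vQ by (simp add: sum.remove)
            moreover have "sum m' Q = m' v + sum m' (Q - {v})" using finQ vQ by (simp add: sum.remove)
            moreover have "sum m' (Q - {v}) = sum m (Q - {v})" by (rule sum.cong) (auto simp: m'_def)
            ultimately have "sum m Q = \<omega> + 1" using eqQ v(2) by (simp add: m'_def)
            thus False using omg_ge[OF fin Q(1), of m] by (simp add: \<omega>_def)
          qed
          have bnd: "\<And>B. B \<in># J' \<Longrightarrow> card (B \<inter> Q) \<le> 1"
          proof -
            fix B assume "B \<in># J'"
            hence "stable_set E V B" using J'(1) by blast
            from clique_stable_card[OF Q(1) this finQ] show "card (B \<inter> Q) \<le> 1" by (simp add: Int_commute)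
          qed
          have "A \<inter> Q \<noteq> {}"
          proof
            assume AQ: "A \<inter> Q = {}"
            have "sum m' Q = (\<Sum>u\<in>Q. cov J' u)" using J'(3) QV by (intro sum.cong) auto
            also have "\<dots> = (\<Sum>B\<in>#J'. card (B \<inter> Q))" using cov_sum[OF finQ] .
            finally have "sum m' Q + 1 \<le> size J'"
              using msum_le0[of J' "\<lambda>B. card (B \<inter> Q)" A, OF bnd A(1)] AQ by simp
            thus False using J'(2) omeq eqQ by simp
          qed
          then obtain u where u: "u \<in> A" "u \<in> Q" by blast
          have uv: "u \<noteq> v" using u vQ by auto
          have "cov J' u \<ge> 1" using cov_mem[OF A(1) u(1)] .
          hence mu: "m' u \<ge> 1" using J'(3) QV u(2) by auto
          have "sum m'' Q = m'' u + sum m'' (Q - {u})" using finQ u(2) by (simp add: sum.remove)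
          moreover have "sum m' Q = m' u + sum m' (Q - {u})" using finQ u(2) by (simp add: sum.remove)
          moreover have "sum m'' (Q - {u}) \<le> sum m' (Q - {u})" by (rule sum_mono) (simp add: m''_def)
          moreover have "m'' u + 1 = m' u" using u uv mu by (simp add: m''_def)
          ultimately show ?thesis using Q(2) eqQ by linarith
        qed
      qed
      define J where "J = add_mset A J''"
      have "\<forall>B\<in>#J. stable_set E V B" using J''(1) J'(1) A(1) by (auto simp: J_def)
      moreover have "size J \<le> omg V E m" using J''(2) key by (simp add: J_def \<omega>_def)
      moreover have "\<forall>u\<in>V. cov J u = m u"
      proof
        fix u assume uV: "u \<in> V"
        have c1: "cov J u = (if u \<in> A then 1 else 0) + m'' u" using J''(3) uV by (simp add: J_def)
        show "cov J u = m u"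
        proof (cases "u \<in> A")
          case True
          have "m' u \<ge> 1" using cov_mem[OF A(1) True] J'(3) uV by simp
          thus ?thesis using c1 True v(2) by (auto simp: m''_def m'_def)
        next
          case False
          thus ?thesis using c1 A(2) by (auto simp: m''_def m'_def)
        qed
      qed
      ultimately show ?thesis by blast
    qed
  qed
qed


lemma ind_sum: "finite V \<Longrightarrow> B \<subseteq> V \<Longrightarrow> (\<Sum>u\<in>V. (w u::nat) * (if u \<in> B then 1 else 0)) = sum w B"
proof -
  assume "finite V" "B \<subseteq> V"
  have "(\<Sum>u\<in>V. (w u::nat) * (if u \<in> B then 1 else 0)) = (\<Sum>u\<in>V. if u \<in> B then w u else 0)"
    by (rule sum.cong) auto
  also have "\<dots> = sum w (V \<inter> B)" using \<open>finite V\<close> by (simp add: sum.If_cases Int_def)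
  also have "V \<inter> B = B" using \<open>B \<subseteq> V\<close> by blast
  finally show ?thesis .
qed

lemma msum_leW: "(\<And>B. B \<in># J \<Longrightarrow> f B \<le> (W::nat)) \<Longrightarrow> (\<Sum>B\<in>#J. f B) \<le> size J * W"
proof (induction J)
  case (add x J)
  hence "f x \<le> W" "(\<Sum>B\<in>#J. f B) \<le> size J * W" by auto
  thus ?case by simp
qed simp

lemma keyclique:
  assumes sg: "simple_graph V E" and pf: "perfect V E" and W: "alp V E w > 0"
  shows "\<exists>Q. clique E V Q \<and> (\<forall>I. stable_set E V I \<and> sum w I = alp V E w \<longrightarrow> (\<exists>u\<in>I\<inter>Q. w u > 0))"
proof (rule ccontr)
  define W where "W = alp V E w"
  have fin: "finite V" using sg by (simp add: simple_graph_def)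
  assume "\<not> ?thesis"
  hence "\<forall>Q. \<exists>I. clique E V Q \<longrightarrow> stable_set E V I \<and> sum w I = W \<and> (\<forall>u\<in>I\<inter>Q. w u = 0)"
    by (auto simp: W_def)
  then obtain g where g: "\<And>Q. clique E V Q \<Longrightarrow> stable_set E V (g Q) \<and> sum w (g Q) = W \<and> (\<forall>u\<in>g Q\<inter>Q. w u = 0)"
    by metis
  define f where "f Q = {u \<in> g Q. w u > 0}" for Q
  have fst: "stable_set E V (f Q)" if "clique E V Q" for Q
    using g[OF that] by (auto simp: f_def stable_set_def)
  have fV: "f Q \<subseteq> V" if "clique E V Q" for Q using fst[OF that] by (simp add: stable_set_def)
  have fw: "sum w (f Q) = W" if "clique E V Q" for Q
  proof -
    have "finite (g Q)" using g[OF that] fin finite_subset by (auto simp: stable_set_def)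
    hence "sum w (f Q) = sum w (g Q)" unfolding f_def by (intro sum.mono_neutral_left) auto
    thus ?thesis using g[OF that] by simp
  qed
  have fdis: "f Q \<inter> Q = {}" if "clique E V Q" for Q using g[OF that] by (auto simp: f_def)
  define C where "C = {Q. clique E V Q}"
  have finC: "finite C" using finite_cliques[OF fin] by (simp add: C_def)
  define N where "N = card C"
  have N1: "N \<ge> 1" using finC clique_empty[of E V] by (auto simp: N_def C_def Suc_le_eq card_gt_0_iff)
  define mm :: "'a \<Rightarrow> nat" where "mm u = (\<Sum>Q\<in>C. if u \<in> f Q then 1 else 0)" for u
  obtain J where J: "\<forall>B\<in>#J. stable_set E V B" "size J \<le> omg V E mm" "\<forall>v\<in>V. cov J v = mm v"
    using wcol[OF sg pf] by blast
  have omN: "omg V E mm \<le> N - 1"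
  proof -
    obtain Q0 where Q0: "clique E V Q0" "sum mm Q0 = omg V E mm" using omg_att[OF fin] by blast
    have finQ0: "finite Q0" using Q0(1) fin finite_subset by (auto simp: clique_def)
    have "sum mm Q0 = (\<Sum>Q\<in>C. \<Sum>u\<in>Q0. if u \<in> f Q then 1 else 0)"
      unfolding mm_def by (rule sum.swap)
    also have "\<dots> = (\<Sum>Q\<in>C. card (Q0 \<inter> f Q))"
      using finQ0 by (intro sum.cong) (auto simp: sum.If_cases Int_def)
    also have "\<dots> \<le> (\<Sum>Q\<in>C. if Q = Q0 then 0 else 1)"
    proof (rule sum_mono)
      fix Q assume "Q \<in> C"
      hence "card (Q0 \<inter> f Q) \<le> 1" using clique_stable_card[OF Q0(1) fst finQ0] by (simp add: C_def)
      moreover have "Q = Q0 \<Longrightarrow> Q0 \<inter> f Q = {}" using fdis Q0(1) by blast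
      ultimately show "card (Q0 \<inter> f Q) \<le> (if Q = Q0 then 0 else 1)" by auto
    qed
    also have "\<dots> = N - 1"
    proof -
      have "Q0 \<in> C" using Q0(1) by (simp add: C_def)
      hence "(\<Sum>Q\<in>C. if Q = Q0 then 0 else (1::nat)) = (\<Sum>Q\<in>C - {Q0}. if Q = Q0 then 0 else 1)"
        using finC by (simp add: sum.remove)
      also have "\<dots> = card (C - {Q0})" by simp
      finally show ?thesis using \<open>Q0 \<in> C\<close> finC by (simp add: N_def)
    qed
    finally show ?thesis using Q0(2) by simp
  qed
  have "N * W = (\<Sum>Q\<in>C. sum w (f Q))" using fw by (simp add: N_def C_def)
  also have "\<dots> = (\<Sum>Q\<in>C. \<Sum>u\<in>V. w u * (if u \<in> f Q then 1 else 0))"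
  proof (rule sum.cong[OF refl])
    fix Q assume "Q \<in> C"
    hence "f Q \<subseteq> V" using fV by (simp add: C_def)
    from ind_sum[OF fin this, of w] show "sum w (f Q) = (\<Sum>u\<in>V. w u * (if u \<in> f Q then 1 else 0))" by simp
  qed
  also have "\<dots> = (\<Sum>u\<in>V. w u * mm u)"
    unfolding mm_def sum_distrib_left by (rule sum.swap)
  also have "\<dots> = (\<Sum>u\<in>V. \<Sum>B\<in>#J. w u * (if u \<in> B then 1 else 0))"
  proof (rule sum.cong[OF refl])
    fix x assume "x \<in> V"
    hence "mm x = (\<Sum>B\<in>#J. if x \<in> B then 1 else 0)" using J(3) by (simp add: cov_def)
    thus "w x * mm x = (\<Sum>B\<in>#J. w x * (if x \<in> B then 1 else 0))"
      by (simp add: sum_mset_distrib_left multiset.map_comp o_def)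
  qed
  also have "\<dots> = (\<Sum>B\<in>#J. \<Sum>u\<in>V. w u * (if u \<in> B then 1 else 0))" by (rule swap_ms)
  also have "\<dots> = (\<Sum>B\<in>#J. sum w B)"
    using J(1) ind_sum[OF fin] by (intro arg_cong[where f=sum_mset] image_mset_cong) (auto simp: stable_set_def)
  also have "\<dots> \<le> size J * W"
    using J(1) by (intro msum_leW) (auto simp: W_def intro: alp_ge[OF fin])
  also have "\<dots> \<le> (N - 1) * W" using J(2) omN by simp
  finally have "N * W \<le> (N - 1) * W" .
  thus False using N1 W by (simp add: W_def)
qed

lemma cover:
  assumes sg: "simple_graph V E" and pf: "perfect V E"
  shows "\<exists>M. (\<forall>Q\<in>#M. clique E V Q) \<and> size M \<le> alp V E w \<and> (\<forall>v\<in>V. w v \<le> cov M v)"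
proof (induction "sum w V" arbitrary: w rule: less_induct)
  case less
  have fin: "finite V" using sg by (simp add: simple_graph_def)
  show ?case
  proof (cases "alp V E w = 0")
    case True
    have "\<forall>v\<in>V. w v \<le> cov {#} v"
    proof
      fix v assume "v \<in> V"
      hence "stable_set E V {v}" by (simp add: stable_set_def)
      thus "w v \<le> cov {#} v" using alp_ge[OF fin, of E "{v}" w] True by simp
    qed
    thus ?thesis by (intro exI[of _ "{#}"]) simp
  next
    case False
    define W where "W = alp V E w"
    obtain Q where Q: "clique E V Q" "\<And>I. stable_set E V I \<Longrightarrow> sum w I = W \<Longrightarrow> \<exists>u\<in>I\<inter>Q. w u > 0"
      using keyclique[OF sg pf, of w] False by (auto simp: W_def)
    have QV: "Q \<subseteq> V" using Q(1) by (simp add: clique_def)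
    obtain I0 where I0: "stable_set E V I0" "sum w I0 = W" using alp_att[OF fin] W_def by blast
    obtain u0 where u0: "u0 \<in> Q" "w u0 > 0" using Q(2)[OF I0] by blast
    define w' where "w' u = (if u \<in> Q \<and> w u > 0 then w u - 1 else w u)" for u
    have dec: "sum w' I + 1 \<le> sum w I" if "finite I" "u \<in> I" "u \<in> Q" "w u > 0" for I u
    proof -
      have "sum w I = w u + sum w (I - {u})" using that by (simp add: sum.remove)
      moreover have "sum w' I = w' u + sum w' (I - {u})" using that by (simp add: sum.remove)
      moreover have "sum w' (I - {u}) \<le> sum w (I - {u})" by (rule sum_mono) (simp add: w'_def)
      ultimately show ?thesis using that by (simp add: w'_def)
    qed
    have lt: "sum w' V < sum w V" using dec[OF fin _ u0] QV u0 by auto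
    obtain M' where M': "\<forall>Q\<in>#M'. clique E V Q" "size M' \<le> alp V E w'" "\<forall>v\<in>V. w' v \<le> cov M' v"
      using less(1)[OF lt] by blast
    have key: "alp V E w' + 1 \<le> W"
    proof -
      obtain I where I: "stable_set E V I" "sum w' I = alp V E w'" using alp_att[OF fin] by blast
      have finI: "finite I" using I(1) fin finite_subset by (auto simp: stable_set_def)
      have le: "sum w' I \<le> sum w I" by (rule sum_mono) (simp add: w'_def)
      show ?thesis
      proof (cases "sum w I = W")
        case True
        then obtain u where "u \<in> I" "u \<in> Q" "w u > 0" using Q(2)[OF I(1)] by blast
        thus ?thesis using dec[OF finI] I(2) True by fastforce
      next
        case False
        hence "sum w I < W" using alp_ge[OF fin I(1), of w] W_def by simp
        thus ?thesis using le I(2) by simp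
      qed
    qed
    define M where "M = add_mset Q M'"
    have "\<forall>Q\<in>#M. clique E V Q" using M'(1) Q(1) by (auto simp: M_def)
    moreover have "size M \<le> alp V E w" using M'(2) key by (simp add: M_def W_def)
    moreover have "\<forall>v\<in>V. w v \<le> cov M v"
    proof
      fix v assume "v \<in> V"
      hence "w' v \<le> cov M' v" using M'(3) by simp
      thus "w v \<le> cov M v" by (auto simp: M_def w'_def split: if_splits)
    qed
    ultimately show ?thesis by blast
  qed
qed


lemma extend_max:
  assumes fin: "finite V" and Q: "clique E V Q"
  shows "\<exists>Q'\<in>maximal_cliques V E. Q \<subseteq> Q'"
proof -
  define F where "F = {Q'. clique E V Q' \<and> Q \<subseteq> Q'}"
  have finF: "finite F" using finite_cliques[OF fin, of E] by (rule finite_subset[rotated]) (auto simp: F_def)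
  have "Max (card ` F) \<in> card ` F" using finF Q by (intro Max_in) (auto simp: F_def)
  then obtain Q' where Q': "Q' \<in> F" "card Q' = Max (card ` F)" by auto
  have "clique E V Q'" using Q' by (simp add: F_def)
  moreover have "\<forall>Q''. clique E V Q'' \<and> Q' \<subseteq> Q'' \<longrightarrow> Q'' = Q'"
  proof (intro allI impI)
    fix Q'' assume a: "clique E V Q'' \<and> Q' \<subseteq> Q''"
    hence "Q'' \<in> F" using Q' by (auto simp: F_def)
    hence c1: "card Q'' \<le> card Q'" using Q'(2) finF by simp
    have fQ: "finite Q''" using a fin finite_subset by (auto simp: clique_def)
    have "Q' \<subseteq> Q''" using a by blast
    from card_subset_eq[OF fQ this] c1 card_mono[OF fQ this] show "Q'' = Q'" by simp
  qed
  ultimately have "Q' \<in> maximal_cliques V E" by (simp add: maximal_cliques_def)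
  thus ?thesis using Q' by (auto simp: F_def)
qed

lemma cov_image: "(\<And>Q. Q \<in># M \<Longrightarrow> Q \<subseteq> g Q) \<Longrightarrow> cov M v \<le> cov (image_mset g M) v"
proof (induction M)
  case (add x M)
  hence "cov M v \<le> cov (image_mset g M) v" "x \<subseteq> g x" by auto
  thus ?case by auto
qed simp

lemma msum_filter: "(\<Sum>B\<in>#M. if P B then 1 else (0::nat)) = size (filter_mset P M)"
  by (induction M) auto

lemma scale:
  assumes "finite V"
  shows "(\<forall>v\<in>V. w v \<ge> (0::rat)) \<longrightarrow> (\<exists>D::nat. D > 0 \<and> (\<exists>wn::'a \<Rightarrow> nat. \<forall>v\<in>V. w v * of_nat D = of_nat (wn v)))"
  using assms
proof (induction V rule: finite_induct)
  case empty thus ?case by (intro impI exI[of _ 1]) simp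
next
  case (insert x F)
  show ?case
  proof
    assume pos: "\<forall>v\<in>insert x F. 0 \<le> w v"
    then obtain D wn where D: "D > 0" "\<forall>v\<in>F. w v * of_nat D = of_nat (wn v)" using insert by auto
    obtain a b where ab: "quotient_of (w x) = (a, b)" by fastforce
    have b: "b > 0" using quotient_of_denom_pos[OF ab] .
    have wx: "w x = of_int a / of_int b" using quotient_of_div[OF ab] .
    have "of_int a = w x * of_int b" using wx b by simp
    hence a: "a \<ge> 0" using pos b by (metis insertI1 mult_nonneg_nonneg of_int_0_le_iff of_int_le_iff less_imp_le)
    define D' where "D' = D * nat b"
    define wn' where "wn' v = (if v = x then nat a * D else wn v * nat b)" for v
    have "D' > 0" using D b by (simp add: D'_def)
    moreover have "\<forall>v\<in>insert x F. w v * of_nat D' = of_nat (wn' v)"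
    proof
      fix v assume v: "v \<in> insert x F"
      show "w v * of_nat D' = of_nat (wn' v)"
      proof (cases "v = x")
        case True
        have "w x * of_nat D' = w x * of_int b * of_nat D" using b by (simp add: D'_def)
        also have "\<dots> = of_int a * of_nat D" using wx b by simp
        finally show ?thesis using True a by (simp add: wn'_def)
      next
        case False
        hence "v \<in> F" using v by simp
        hence "w v * of_nat D = of_nat (wn v)" using D by simp
        hence "w v * of_nat D * of_nat (nat b) = of_nat (wn v) * of_nat (nat b)" by simp
        thus ?thesis using False by (simp add: D'_def wn'_def mult.assoc)
      qed
    qed
    ultimately show "\<exists>D::nat. D > 0 \<and> (\<exists>wn::'a \<Rightarrow> nat. \<forall>v\<in>insert x F. w v * of_nat D = of_nat (wn v))" by blast
  qed
qed

theorem corollary18: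
  fixes V :: "'a set" and E :: "'a \<Rightarrow> 'a \<Rightarrow> bool" and w :: "'a \<Rightarrow> rat"
  assumes "simple_graph V E"
    and "perfect V E"
    and "\<forall>v\<in>V. w v \<ge> 0"
  shows "core V E w \<noteq> {}"
proof -
  have fin: "finite V" using assms(1) by (simp add: simple_graph_def)
  obtain D :: nat and wn where D: "D > 0" "\<forall>v\<in>V. w v * of_nat D = of_nat (wn v)"
    using scale[OF fin, of w] assms(3) by blast
  obtain M where M: "\<forall>Q\<in>#M. clique E V Q" "size M \<le> alp V E wn" "\<forall>v\<in>V. wn v \<le> cov M v"
    using cover[OF assms(1,2), of wn] by blast
  define MC where "MC = maximal_cliques V E"
  have finMC: "finite MC" unfolding MC_def maximal_cliques_def
    using finite_cliques[OF fin, of E] by (rule finite_subset[rotated]) auto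
  have "\<forall>Q. \<exists>Q'. clique E V Q \<longrightarrow> Q' \<in> MC \<and> Q \<subseteq> Q'" using extend_max[OF fin] MC_def by blast
  then obtain g where g: "\<And>Q. clique E V Q \<Longrightarrow> g Q \<in> MC \<and> Q \<subseteq> g Q" by metis
  define M2 where "M2 = image_mset g M"
  have M2MC: "set_mset M2 \<subseteq> MC" using g M(1) by (auto simp: M2_def)
  have M2cl: "\<forall>Q\<in>#M2. clique E V Q" using M2MC by (auto simp: MC_def maximal_cliques_def)
  have Mg: "\<And>Q. Q \<in># M \<Longrightarrow> Q \<subseteq> g Q" using g M(1) by blast
  have M2cov: "\<forall>v\<in>V. wn v \<le> cov M2 v"
  proof
    fix v assume "v \<in> V"
    hence "wn v \<le> cov M v" using M(3) by blast
    also have "cov M v \<le> cov M2 v" unfolding M2_def by (rule cov_image[OF Mg])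
    finally show "wn v \<le> cov M2 v" .
  qed
  have M2size: "size M2 \<le> alp V E wn" using M(2) by (simp add: M2_def)
  define y where "y Q = of_nat (count M2 Q) / (of_nat D :: rat)" for Q
  have Dpos: "(of_nat D :: rat) > 0" using D by simp
  have money_eq: "money V E y S = of_nat (size (filter_mset (\<lambda>Q. Q \<inter> S \<noteq> {}) M2)) / of_nat D" for S
  proof -
    let ?A = "{Q\<in>MC. Q \<inter> S \<noteq> {}}"
    have 1: "money V E y S = of_nat (\<Sum>Q\<in>?A. count M2 Q) / of_nat D"
      by (simp add: money_def y_def MC_def sum_divide_distrib)
    have "(\<Sum>Q\<in>?A. count M2 Q) = (\<Sum>Q\<in>?A. count (filter_mset (\<lambda>Q. Q \<inter> S \<noteq> {}) M2) Q)"
      by (rule sum.cong) auto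
    also have "\<dots> = size (filter_mset (\<lambda>Q. Q \<inter> S \<noteq> {}) M2)"
      using M2MC finMC by (intro sum_count_sub) auto
    finally show ?thesis using 1 by simp
  qed
  have sumy: "(\<Sum>Q\<in>MC. y Q) = of_nat (size M2) / of_nat D"
  proof -
    have "(\<Sum>Q\<in>MC. y Q) = of_nat (\<Sum>Q\<in>MC. count M2 Q) / of_nat D"
      by (simp add: y_def sum_divide_distrib)
    thus ?thesis using sum_count_sub[OF M2MC finMC] by simp
  qed
  have stable_le: "sum w I \<le> money V E y S" if S: "S \<subseteq> V" and I: "stable_set E S I" for S I
  proof -
    have IV: "I \<subseteq> V" using I S by (auto simp: stable_set_def)
    have finI: "finite I" using IV fin finite_subset by blast
    have "sum w I * of_nat D = of_nat (sum wn I)"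
      using D(2) IV by (simp add: sum_distrib_right subset_iff)
    also have "sum wn I \<le> (\<Sum>u\<in>I. cov M2 u)" using M2cov IV by (intro sum_mono) auto
    also have "\<dots> = (\<Sum>B\<in>#M2. card (B \<inter> I))" using cov_sum[OF finI] .
    also have "\<dots> \<le> (\<Sum>B\<in>#M2. if B \<inter> S \<noteq> {} then 1 else 0)"
    proof (rule sum_mset_mono)
      fix B assume "B \<in># M2"
      hence cl: "clique E V B" using M2cl by blast
      have finB: "finite B" using cl fin finite_subset by (auto simp: clique_def)
      have "card (B \<inter> I) \<le> 1" using clique_stable_card[OF cl I finB] .
      moreover have "B \<inter> S = {} \<Longrightarrow> B \<inter> I = {}" using I by (auto simp: stable_set_def)
      ultimately show "card (B \<inter> I) \<le> (if B \<inter> S \<noteq> {} then 1 else 0)" by auto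
    qed
    also have "\<dots> = size (filter_mset (\<lambda>Q. Q \<inter> S \<noteq> {}) M2)" by (rule msum_filter)
    finally have "sum w I * of_nat D \<le> of_nat (size (filter_mset (\<lambda>Q. Q \<inter> S \<noteq> {}) M2))"
      by (simp only: of_nat_le_iff)
    thus ?thesis using Dpos by (simp add: money_eq pos_le_divide_eq)
  qed
  have cost_le: "cost E w S \<le> money V E y S" if S: "S \<subseteq> V" for S
  proof -
    have finS: "finite S" using S fin finite_subset by blast
    have "cost E w S \<in> (\<lambda>I. \<Sum>v\<in>I. w v) ` {I. stable_set E S I}"
      unfolding cost_def using finite_stables[OF finS] stable_empty by (intro Max_in) auto
    then obtain I where "stable_set E S I" "cost E w S = sum w I" by auto
    thus ?thesis using stable_le[OF S] by simp
  qed
  have sum_le_cost: "(\<Sum>Q\<in>MC. y Q) \<le> cost E w V"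
  proof -
    obtain I0 where I0: "stable_set E V I0" "sum wn I0 = alp V E wn" using alp_att[OF fin] by blast
    have I0V: "I0 \<subseteq> V" using I0 by (simp add: stable_set_def)
    have "sum w I0 * of_nat D = of_nat (sum wn I0)"
      using D(2) I0V by (simp add: sum_distrib_right subset_iff)
    hence "of_nat (size M2) \<le> sum w I0 * of_nat D" using M2size I0(2) by simp
    hence "(\<Sum>Q\<in>MC. y Q) \<le> sum w I0" using Dpos by (simp add: sumy divide_le_eq)
    also have "sum w I0 \<le> cost E w V"
      unfolding cost_def using finite_stables[OF fin] I0(1) by (intro Max_ge) auto
    finally show ?thesis .
  qed
  have money_le: "money V E y V \<le> (\<Sum>Q\<in>MC. y Q)"
    unfolding money_def MC_def[symmetric] using finMC Dpos
    by (intro sum_mono2) (auto simp: y_def)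
  have cV: "cost E w V \<le> money V E y V" using cost_le by simp
  have sy: "(\<Sum>Q\<in>MC. y Q) = cost E w V" using cV money_le sum_le_cost by linarith
  have ypos: "\<forall>Q\<in>MC. y Q \<ge> 0" using Dpos by (simp add: y_def)
  have "y \<in> core V E w"
    unfolding core_def imputation_def MC_def[symmetric]
    using sy ypos cost_le by blast
  thus ?thesis by blast
qed

end
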